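(* Let $\Lambda$ be a $d$-dimensional Euclidean lattice of minimum $1$, and let $\mathcal V=-\mathcal V\subset\Lambda\setminus\{0\}$ be a finite set of nonzero elements of squared Euclidean length at most $2$ whose convex hull $P$ is $d$-dimensional. Then (i) the interior of $P$ meets $\Lambda$ only in $\{0\}$; (ii) if moreover every element of $\mathcal V$ has squared Euclidean length strictly smaller than $2$, then $P\cap\Lambda=\mathcal V\cup\{0\}$ and $\mathcal V$ is the set of vertices of $P$.
   Context: The minimum of a lattice is the smallest squared Euclidean length of its nonzero elements. *)

theory Defs
  imports "HOL-Analysis.Analysis"
begin

definition euclidean_lattice :: "'a::euclidean_space set \<Rightarrow> bool" where
  "euclidean_lattice L \<longleftrightarrow>
     (\<exists>B. independent B \<and> span B = UNIV \<and>
          L = {x. \<exists>c. (\<forall>v\<in>B. c v \<in> \<int>) \<and> x = (\<Sum>v\<in>B. c v *\<^sub>R v)})"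

definition lattice_minimum :: "'a::euclidean_space set \<Rightarrow> real" where
  "lattice_minimum L = (INF x \<in> L - {0}. (norm x)\<^sup>2)"

end

theory Submission
  imports Defs
begin

lemma hull_dot_ge:
  fixes V :: "'a::euclidean_space set"
  assumes "x \<in> convex hull V" "c \<le> inner y x"
  shows "\<exists>v\<in>V. c \<le> inner y v"
proof (rule ccontr)
  assume "\<not> ?thesis"
  hence "V \<subseteq> {z. inner y z < c}" by auto
  hence "convex hull V \<subseteq> {z. inner y z < c}"
    by (simp add: convex_halfspace_lt hull_minimal)
  with assms show False by auto
qed

lemma lat_zero:
  assumes "euclidean_lattice L" shows "0 \<in> L"
proof -
  obtain B where "L = {x. \<exists>c. (\<forall>v\<in>B. c v \<in> \<int>) \<and> x = (\<Sum>v\<in>B. c v *\<^sub>R v)}"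
    using assms unfolding euclidean_lattice_def by blast
  then show ?thesis by (auto intro!: exI[of _ "\<lambda>_. 0"])
qed

lemma lat_diff:
  assumes "euclidean_lattice L" "x \<in> L" "y \<in> L" shows "x - y \<in> L"
proof -
  obtain B where LB: "L = {x. \<exists>c. (\<forall>v\<in>B. c v \<in> \<int>) \<and> x = (\<Sum>v\<in>B. c v *\<^sub>R v)}"
    using assms unfolding euclidean_lattice_def by blast
  obtain c d where c: "\<forall>v\<in>B. c v \<in> \<int>" "x = (\<Sum>v\<in>B. c v *\<^sub>R v)"
    and d: "\<forall>v\<in>B. d v \<in> \<int>" "y = (\<Sum>v\<in>B. d v *\<^sub>R v)"
    using assms(2,3) LB by auto
  have "x - y = (\<Sum>v\<in>B. (c v - d v) *\<^sub>R v)"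
    using c d by (simp add: sum_subtractf scaleR_diff_left)
  moreover have "\<forall>v\<in>B. c v - d v \<in> \<int>" using c d by auto
  ultimately show ?thesis unfolding LB by (intro CollectI exI[of _ "\<lambda>v. c v - d v"]) simp
qed

lemma lat_min:
  assumes "lattice_minimum L = 1" "z \<in> L" "z \<noteq> 0" shows "1 \<le> (norm z)\<^sup>2"
proof -
  have "(INF x \<in> L - {0}. (norm x)\<^sup>2) \<le> (norm z)\<^sup>2"
    by (rule cInf_lower) (use assms in \<open>auto intro: bdd_belowI[of _ 0]\<close>)
  with assms(1) show ?thesis unfolding lattice_minimum_def by simp
qed

lemma key:
  fixes x v :: "'a::euclidean_space"
  assumes "inner x v \<ge> (norm x)\<^sup>2" shows "(norm (x - v))\<^sup>2 \<le> (norm v)\<^sup>2 - (norm x)\<^sup>2"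
proof -
  have "(norm (x - v))\<^sup>2 = (norm x)\<^sup>2 - 2 * inner x v + (norm v)\<^sup>2"
    by (simp add: power2_norm_eq_inner inner_diff_left inner_diff_right inner_commute)
  with assms show ?thesis by simp
qed

lemma key2:
  fixes x v :: "'a::euclidean_space"
  assumes "inner x v > (norm x)\<^sup>2" shows "(norm (x - v))\<^sup>2 < (norm v)\<^sup>2 - (norm x)\<^sup>2"
proof -
  have "(norm (x - v))\<^sup>2 = (norm x)\<^sup>2 - 2 * inner x v + (norm v)\<^sup>2"
    by (simp add: power2_norm_eq_inner inner_diff_left inner_diff_right inner_commute)
  with assms show ?thesis by simp
qed

lemma zero_of:
  assumes "lattice_minimum L = 1" "z \<in> L" "(norm z)\<^sup>2 < 1" shows "z = 0"
  using lat_min[OF assms(1,2)] assms(3) by force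

theorem proposition11p3:
  fixes L :: "'a::euclidean_space set" and V :: "'a set"
  assumes "euclidean_lattice L"
    and "lattice_minimum L = 1"
    and "finite V"
    and "uminus ` V = V"
    and "V \<subseteq> L - {0}"
    and "\<forall>v\<in>V. (norm v)\<^sup>2 \<le> 2"
    and "aff_dim (convex hull V) = int DIM('a)"
  shows "interior (convex hull V) \<inter> L = {0}
    \<and> ((\<forall>v\<in>V. (norm v)\<^sup>2 < 2) \<longrightarrow>
         convex hull V \<inter> L = V \<union> {0} \<and> {x. x extreme_point_of (convex hull V)} = V)"
proof -
  let ?P = "convex hull V"
  have L0: "0 \<in> L" using lat_zero assms(1) .
  have Pne: "?P \<noteq> {}" proof
    assume "?P = {}"
    hence "aff_dim ?P = -1" by simp
    with assms(7) show False by simp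
  qed
  have "rel_interior ?P \<noteq> {}" using Pne by (simp add: rel_interior_eq_empty)
  hence "interior ?P \<noteq> {}" using interior_rel_interior[OF assms(7)] by simp
  then obtain y where y: "y \<in> interior ?P" by auto
  then obtain r where r: "r > 0" "ball y r \<subseteq> ?P" by (meson mem_interior)
  have symP: "uminus ` ?P = ?P"
    using convex_hull_linear_image[of uminus V] assms(4) by (simp add: linear_uminus)
  have "ball (-y) r \<subseteq> ?P"
  proof
    fix z assume "z \<in> ball (-y) r"
    hence "-z \<in> ball y r" by (simp add: dist_norm norm_minus_commute add.commute)
    hence "-z \<in> ?P" using r by auto
    hence "- (-z) \<in> uminus ` ?P" by blast
    thus "z \<in> ?P" using symP by simp
  qed
  hence my: "-y \<in> interior ?P" using r(1) by (meson centre_in_ball interior_maximal open_ball subsetD)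
  have "(1/2::real) *\<^sub>R y + (1/2::real) *\<^sub>R (-y) \<in> interior ?P"
    by (rule convexD[OF convex_interior[OF convex_convex_hull[of V]] y my]) auto
  hence P0: "0 \<in> interior ?P" by (simp add: scaleR_right_diff_distrib)
  have I: "interior ?P \<inter> L = {0}"
  proof (rule ccontr)
    assume "\<not> ?thesis"
    then obtain x where x: "x \<in> interior ?P" "x \<in> L" "x \<noteq> 0" using P0 L0 by auto
    then obtain e where e: "e > 0" "ball x e \<subseteq> ?P" by (meson mem_interior)
    define t where "t = e / (2 * norm x)"
    have t: "t > 0" using e x(3) by (simp add: t_def)
    have "dist x ((1 + t) *\<^sub>R x) = t * norm x" using t
      by (simp add: dist_norm algebra_simps)
    also have "\<dots> < e" using e x(3) by (simp add: t_def)
    finally have "(1 + t) *\<^sub>R x \<in> ?P" using e by auto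
    moreover have "(1 + t) * (norm x)\<^sup>2 \<le> inner x ((1 + t) *\<^sub>R x)"
      by (simp add: power2_norm_eq_inner)
    ultimately obtain v where v: "v \<in> V" "(1 + t) * (norm x)\<^sup>2 \<le> inner x v"
      using hull_dot_ge by blast
    have nx: "(norm x)\<^sup>2 > 0" using x(3) by simp
    have "t * (norm x)\<^sup>2 > 0" using nx t by simp
    hence gt: "inner x v > (norm x)\<^sup>2" using v(2) by (simp add: algebra_simps)
    have "(norm (x - v))\<^sup>2 < (norm v)\<^sup>2 - (norm x)\<^sup>2" using gt by (intro key2)
    moreover have "1 \<le> (norm x)\<^sup>2" using lat_min assms(2) x by blast
    moreover have "(norm v)\<^sup>2 \<le> 2" using assms(6) v by auto
    moreover have "x - v \<in> L" using lat_diff assms(1,5) x v by blast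
    ultimately have "x - v = 0" by (intro zero_of[OF assms(2)]) auto
    hence "x = v" by simp
    with gt show False by (simp add: power2_norm_eq_inner)
  qed
  have II: "convex hull V \<inter> L = V \<union> {0} \<and> {x. x extreme_point_of (convex hull V)} = V"
    if lt: "\<forall>v\<in>V. (norm v)\<^sup>2 < 2"
  proof
    have C: "x \<in> V" if H: "x \<in> convex hull W" "W \<subseteq> V" "x \<in> L" "x \<noteq> 0" for x W
    proof -
      obtain v where v: "v \<in> W" "(norm x)\<^sup>2 \<le> inner x v"
        using hull_dot_ge[OF H(1), of "(norm x)\<^sup>2" x] by (auto simp: power2_norm_eq_inner)
      have "(norm (x - v))\<^sup>2 \<le> (norm v)\<^sup>2 - (norm x)\<^sup>2" using v(2) by (intro key) simp
      moreover have "1 \<le> (norm x)\<^sup>2" using lat_min assms(2) H by blast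
      moreover have "(norm v)\<^sup>2 < 2" using lt v H(2) by auto
      moreover have "x - v \<in> L" using lat_diff assms(1,5) H v by blast
      ultimately have "x - v = 0" by (intro zero_of[OF assms(2)]) auto
      thus ?thesis using v H(2) by auto
    qed
    show "convex hull V \<inter> L = V \<union> {0}"
    proof
      show "convex hull V \<inter> L \<subseteq> V \<union> {0}" using C[of _ V] by auto
      show "V \<union> {0} \<subseteq> convex hull V \<inter> L"
        using hull_subset[of V convex] assms(5) L0 P0 interior_subset by blast
    qed
    have "x extreme_point_of ?P \<longleftrightarrow> x \<in> V" for x
    proof (rule extreme_point_of_convex_hull_convex_independent)
      show "compact V" using assms(3) by (simp add: finite_imp_compact)
      fix a assume a: "a \<in> V"
      show "a \<notin> convex hull (V - {a})"
      proof
        assume "a \<in> convex hull (V - {a})"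
        then obtain v where v: "v \<in> V - {a}" "(norm a)\<^sup>2 \<le> inner a v"
          using hull_dot_ge[of a "V - {a}" "(norm a)\<^sup>2" a] by (auto simp: power2_norm_eq_inner)
        have "(norm (a - v))\<^sup>2 \<le> (norm v)\<^sup>2 - (norm a)\<^sup>2" using v(2) by (intro key) simp
        moreover have "1 \<le> (norm a)\<^sup>2" using lat_min assms(2,5) a by blast
        moreover have "(norm v)\<^sup>2 < 2" using lt v by auto
        moreover have "a - v \<in> L" using lat_diff assms(1,5) a v by blast
        ultimately have "a - v = 0" by (intro zero_of[OF assms(2)]) auto
        thus False using v by auto
      qed
    qed
    thus "{x. x extreme_point_of (convex hull V)} = V" by auto
  qed
  show ?thesis using I II by blast
qed

end
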